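(* Let $d\geq 2$ and $n\geq d+2$. Let $\mathsf{B}^{d+1}_n$ be the simplicial complex whose facets are $\{i,i+1,\dots,i+d+1\}$ for $i=1,\dots,n-d-1$ (a stacked $(d+1)$-ball), and let $\mathsf{K}^d_n=\partial\mathsf{B}^{d+1}_n$, whose facet hypergraph is $$\mathcal{F}(\mathsf{K}^d_n)=\{g\setminus\{w\}: g\in\mathcal{F}(\mathsf{B}^{d+1}_n),\ w\in g\setminus\{\max g,\min g\}\}\cup\{\{1,\dots,d+1\},\{n-d,\dots,n\}\}.$$ Then: (i) if $n=(d+2)k$ for an integer $k\geq 1$, then $\tau(\mathcal{F}(\mathsf{B}^{d+1}_n))=\frac{n}{d+2}$; (ii) if $n=(d+3)k$ for an integer $k\geq 1$, then $\tau(\mathcal{F}(\mathsf{K}^d_n))=\frac{2n}{d+3}$.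
   Context: $\mathcal{F}(\cdot)$ denotes the facet hypergraph; $\tau(\mathcal{H})$ is the minimum size of a set of vertices meeting every hyperedge of $\mathcal{H}$. *)

theory Defs
  imports Complex_Main
begin

definition tau :: "'a set set \<Rightarrow> nat" where
  "tau H = (LEAST k. \<exists>T. T \<subseteq> \<Union>H \<and> finite T \<and> card T = k \<and> (\<forall>e\<in>H. T \<inter> e \<noteq> {}))"

definition facetsB :: "nat \<Rightarrow> nat \<Rightarrow> nat set set" where
  "facetsB d n = {{i..i+d+1} | i. 1 \<le> i \<and> i + d + 1 \<le> n}"

definition facetsK :: "nat \<Rightarrow> nat \<Rightarrow> nat set set" where
  "facetsK d n = {g - {w} | g w. g \<in> facetsB d n \<and> w \<in> g - {Max g, Min g}}
                 \<union> {{1..d+1}, {n-d..n}}"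

end

theory Submission
  imports Defs
begin

lemma tau_eqI:
  assumes "T \<subseteq> \<Union>H" "finite T" "card T = m" "\<forall>e\<in>H. T \<inter> e \<noteq> {}"
  and "\<And>S. S \<subseteq> \<Union>H \<Longrightarrow> finite S \<Longrightarrow> \<forall>e\<in>H. S \<inter> e \<noteq> {} \<Longrightarrow> m \<le> card S"
  shows "tau H = m"
  unfolding tau_def by (rule Least_equality) (use assms in auto)

lemma memB: "1 \<le> i \<Longrightarrow> i + d + 1 \<le> n \<Longrightarrow> {i..i+d+1} \<in> facetsB d n"
  unfolding facetsB_def by blast

lemma MaxI: "Max {i..i+d+1} = i+d+1" for i d :: nat
  by (rule Max_eqI) auto
lemma MinI: "Min {i..i+d+1} = i" for i d :: nat
  by (rule Min_eqI) auto

lemma memK: "1 \<le> i \<Longrightarrow> i+d+1 \<le> n \<Longrightarrow> i < w \<Longrightarrow> w < i+d+1 \<Longrightarrow> {i..i+d+1} - {w} \<in> facetsK d n"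
proof -
  assume a: "1 \<le> i" "i+d+1 \<le> n" "i < w" "w < i+d+1"
  have "w \<in> {i..i+d+1} - {Max {i..i+d+1}, Min {i..i+d+1}}" unfolding MaxI MinI using a by auto
  then have "{i..i+d+1} - {w} \<in> {g - {w} | g w. g \<in> facetsB d n \<and> w \<in> g - {Max g, Min g}}"
    using memB[OF a(1,2)] by blast
  then show ?thesis unfolding facetsK_def by (rule UnI1)
qed

lemma facetsB_cases:
  assumes "e \<in> facetsB d n"
  shows "\<exists>i. 1\<le>i \<and> i+d+1\<le>n \<and> e = {i..i+d+1}"
  using assms unfolding facetsB_def by blast

lemma facetsK_t2: assumes "\<exists>g w. e = g - {w} \<and> g \<in> facetsB d n \<and> w \<in> g - {Max g, Min g}"
  shows "\<exists>i w. 1\<le>i \<and> i+d+1\<le>n \<and> i<w \<and> w<i+d+1 \<and> e = {i..i+d+1}-{w}"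
proof -
  from assms obtain g w where gw: "e = g - {w}" "g \<in> facetsB d n" "w \<in> g - {Max g, Min g}"
    by (elim exE conjE)
  obtain i where i: "1\<le>i" "i+d+1\<le>n" "g = {i..i+d+1}" using facetsB_cases[OF gw(2)] by (elim exE conjE)
  have iw: "i < w" "w < i+d+1" using gw(3) unfolding i(3) MaxI MinI by auto
  have eq: "e = {i..i+d+1} - {w}" using gw(1) i(3) by (simp only:)
  show ?thesis by (rule exI[of _ i], rule exI[of _ w]) (intro conjI i(1) i(2) iw(1) iw(2) eq)
qed

lemma facetsK_cases:
  assumes "e \<in> facetsK d n"
  shows "(\<exists>i w. 1\<le>i \<and> i+d+1\<le>n \<and> i<w \<and> w<i+d+1 \<and> e = {i..i+d+1}-{w}) \<or> e = {1..d+1} \<or> e = {n-d..n}"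
proof -
  have "(\<exists>g w. e = g - {w} \<and> g \<in> facetsB d n \<and> w \<in> g - {Max g, Min g}) \<or> e = {1..d+1} \<or> e = {n-d..n}"
    using assms unfolding facetsK_def by (simp only: Un_iff insert_iff empty_iff simp_thms mem_Collect_eq)
  then show ?thesis
  proof (elim disjE)
    assume "\<exists>g w. e = g - {w} \<and> g \<in> facetsB d n \<and> w \<in> g - {Max g, Min g}"
    then show ?thesis using facetsK_t2 by (intro disjI1)
  qed (intro disjI2 disjI1, assumption, intro disjI2, assumption)
qed

lemma in_union:
  assumes "1 \<le> x" "x \<le> n" "n \<ge> d + 2" "d \<ge> 2"
  shows "x \<in> \<Union>(facetsB d n)" "x \<in> \<Union>(facetsK d n)"
proof -
  define i where "i = (if x + d + 1 \<le> n then x else n - d - 1)"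
  have i: "1 \<le> i" "i + d + 1 \<le> n" "i \<le> x" "x \<le> i + d + 1" using assms by (auto simp: i_def)
  have xi: "x \<in> {i..i+d+1}" using i by simp
  show "x \<in> \<Union>(facetsB d n)" by (rule UnionI[OF memB[OF i(1,2)] xi])
  define w where "w = (if x = i+1 then i+2 else i+1)"
  have "{i..i+d+1} - {w} \<in> facetsK d n" using memK[OF i(1,2), of w] assms by (auto simp: w_def)
  moreover have "x \<in> {i..i+d+1} - {w}" using i by (auto simp: w_def)
  ultimately show "x \<in> \<Union>(facetsK d n)" by (rule UnionI)
qed

lemma partB:
  assumes "d \<ge> 2" "k \<ge> 1" "n = k*(d+2)"
  shows "tau (facetsB d n) = k"
proof -
  define m where "m = d + 2"
  have m: "m \<ge> 4" "n = k*m" using assms by (auto simp: m_def)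
  have "1*m \<le> k*m" using assms(2) by (rule mult_le_mono1)
  then have nge: "d + 2 \<le> n" using m by (simp add: m_def)
  define T where "T = (\<lambda>j. j*m) ` {1..k}"
  show ?thesis
  proof (rule tau_eqI[of T])
    have "j*m \<in> \<Union>(facetsB d n)" if "1 \<le> j" "j \<le> k" for j
    proof (rule in_union(1))
      show "j*m \<le> n" using that m by simp
      show "1 \<le> j*m" using that m by simp
    qed (use assms nge in auto)
    then show "T \<subseteq> \<Union>(facetsB d n)" unfolding T_def by auto
    show "finite T" unfolding T_def by auto
    have "inj_on (\<lambda>j. j*m) {1..k}" using m by (auto simp: inj_on_def)
    then show "card T = k" unfolding T_def by (simp add: card_image)
    show "\<forall>e\<in>facetsB d n. T \<inter> e \<noteq> {}"
    proof
      fix e assume "e \<in> facetsB d n"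
      then obtain i where i: "1\<le>i" "i+d+1\<le>n" "e = {i..i+d+1}" using facetsB_cases by blast
      define q where "q = (i - 1) div m"
      define r where "r = (i - 1) mod m"
      have qr: "i - 1 = q*m + r" "r < m" using m by (auto simp: q_def r_def)
      have "(q+1)*m \<le> k*m" using qr i m by (simp add: m_def algebra_simps)
      then have "q + 1 \<le> k" using m by (subst (asm) mult_le_cancel2) simp
      then have "(q+1)*m \<in> T" unfolding T_def by (intro imageI) simp
      moreover have "(q+1)*m \<in> e" using qr i by (auto simp: m_def algebra_simps)
      ultimately show "T \<inter> e \<noteq> {}" by blast
    qed
    fix S assume S: "S \<subseteq> \<Union>(facetsB d n)" "finite S" "\<forall>e\<in>facetsB d n. S \<inter> e \<noteq> {}"
    define B where "B j = {j*m+1..j*m+d+2}" for j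
    have "B j \<in> facetsB d n" if "j < k" for j
    proof -
      have "(j+1)*m \<le> k*m" using that by (intro mult_le_mono1) simp
      then show ?thesis unfolding B_def using memB[of "j*m+1" d n] m by (simp add: m_def algebra_simps)
    qed
    then have "\<exists>x. x \<in> S \<inter> B j" if "j < k" for j using S(3) that by blast
    then obtain f where f: "\<And>j. j < k \<Longrightarrow> f j \<in> S \<inter> B j" by metis
    have "inj_on f {..<k}"
    proof (rule inj_onI)
      fix a b assume ab: "a \<in> {..<k}" "b \<in> {..<k}" "f a = f b"
      show "a = b"
      proof (rule ccontr)
        assume "a \<noteq> b"
        then consider "a < b" | "b < a" by linarith
        then show False
        proof cases
          case 1
          then have "(a+1)*m \<le> b*m" by (intro mult_le_mono1) simp
          then show False using f[of a] f[of b] ab by (auto simp: B_def m_def algebra_simps)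
        next
          case 2
          then have "(b+1)*m \<le> a*m" by (intro mult_le_mono1) simp
          then show False using f[of a] f[of b] ab by (auto simp: B_def m_def algebra_simps)
        qed
      qed
    qed
    then have "card (f ` {..<k}) = k" by (simp add: card_image)
    moreover have "f ` {..<k} \<subseteq> S" using f by auto
    ultimately show "k \<le> card S" using card_mono[OF S(2)] by metis
  qed
qed

lemma partK:
  assumes "d \<ge> 2" "k \<ge> 1" "n = k*(d+3)"
  shows "tau (facetsK d n) = 2*k"
proof -
  define m where "m = d + 3"
  have m: "m \<ge> 5" "n = k*m" using assms by (auto simp: m_def)
  have "1*m \<le> k*m" using assms(2) by (rule mult_le_mono1)
  then have "m \<le> n" using m(2) by (metis mult_1)
  then have nge: "d + 2 \<le> n" by (simp add: m_def)
  define T1 where "T1 = (\<lambda>j. j*m) ` {1..k}"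
  define T2 where "T2 = (\<lambda>j. j*m+1) ` {..<k}"
  define T where "T = T1 \<union> T2"
  show ?thesis
  proof (rule tau_eqI[of T])
    have "j*m \<in> \<Union>(facetsK d n)" if "1 \<le> j" "j \<le> k" for j
    proof (rule in_union(2))
      show "j*m \<le> n" using that m by simp
      show "1 \<le> j*m" using that m by simp
    qed (use assms nge in auto)
    moreover have "j*m+1 \<in> \<Union>(facetsK d n)" if "j < k" for j
    proof (rule in_union(2))
      have "(j+1)*m \<le> k*m" using that by (intro mult_le_mono1) simp
      then show "j*m+1 \<le> n" using m by simp
    qed (use assms nge in auto)
    ultimately show "T \<subseteq> \<Union>(facetsK d n)" unfolding T_def T1_def T2_def by auto
    show "finite T" unfolding T_def T1_def T2_def by auto
    have "inj_on (\<lambda>j. j*m) {1..k}" using m by (auto simp: inj_on_def)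
    then have c1: "card T1 = k" unfolding T1_def by (simp add: card_image)
    have "inj_on (\<lambda>j. j*m+1) {..<k}" using m by (auto simp: inj_on_def)
    then have c2: "card T2 = k" unfolding T2_def by (simp add: card_image)
    have "T1 \<inter> T2 = {}"
    proof (rule ccontr)
      assume "T1 \<inter> T2 \<noteq> {}"
      then obtain a b where "a*m = b*m+1" unfolding T1_def T2_def by blast
      then have "m dvd b*m + 1" by (metis dvd_triv_right)
      then have "m dvd 1" using dvd_add_right_iff[OF dvd_triv_right[of m b], of 1] by blast
      then show False using m by simp
    qed
    then show "card T = 2*k" unfolding T_def using c1 c2
      by (simp add: card_Un_disjoint T1_def T2_def)
    show "\<forall>e\<in>facetsK d n. T \<inter> e \<noteq> {}"
    proof
      fix e assume "e \<in> facetsK d n"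
      then consider (g) i w where "1\<le>i" "i+d+1\<le>n" "i<w" "w<i+d+1" "e = {i..i+d+1}-{w}"
        | (a) "e = {1..d+1}" | (b) "e = {n-d..n}" using facetsK_cases by blast
      then show "T \<inter> e \<noteq> {}"
      proof cases
        case a
        have "0*m+1 \<in> T" unfolding T_def T2_def using assms by (intro UnI2 imageI) simp
        then show ?thesis using a by auto
      next
        case b
        have "k*m \<in> T" unfolding T_def T1_def using assms by (intro UnI1 imageI) simp
        then show ?thesis using b m by auto
      next
        case g
        define q where "q = (i - 1) div m"
        define r where "r = (i - 1) mod m"
        have qr: "i - 1 = q*m + r" "r < m" using m by (auto simp: q_def r_def)
        consider "r = 0" | "r = 1" | "r \<ge> 2" by linarith
        then show ?thesis
        proof cases
          case 1
          have "q*m < k*m" using qr g 1 m by (simp add: m_def algebra_simps)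
          then have "q < k" by simp
          then have "q*m+1 \<in> T" unfolding T_def T2_def by (intro UnI2 imageI) simp
          moreover have "q*m+1 \<in> e" using g qr 1 by auto
          ultimately show ?thesis by blast
        next
          case 2
          have "(q+1)*m \<le> k*m" using qr g 2 m by (simp add: m_def algebra_simps)
          then have "q+1 \<le> k" using m by (subst (asm) mult_le_cancel2) simp
          then have "(q+1)*m \<in> T" unfolding T_def T1_def by (intro UnI1 imageI) simp
          moreover have "(q+1)*m \<in> e" using g qr 2 by (auto simp: m_def algebra_simps)
          ultimately show ?thesis by blast
        next
          case 3
          have "(q+1)*m < k*m" using qr g 3 m by (simp add: m_def algebra_simps)
          then have "q+1 < k" by (subst (asm) mult_less_cancel2) simp
          then have x2: "(q+1)*m+1 \<in> T" unfolding T_def T2_def by (intro UnI2 imageI) simp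
          have "q+1 \<le> k" using \<open>q+1<k\<close> by simp
          then have x1: "(q+1)*m \<in> T" unfolding T_def T1_def by (intro UnI1 imageI) simp
          have i1: "(q+1)*m \<in> {i..i+d+1}" "(q+1)*m+1 \<in> {i..i+d+1}"
            using g qr 3 by (auto simp: m_def algebra_simps)
          show ?thesis
          proof (cases "w = (q+1)*m")
            case True
            then have "(q+1)*m+1 \<in> e" using g i1 by auto
            then show ?thesis using x2 by blast
          next
            case False
            then have "(q+1)*m \<in> e" using g i1 by auto
            then show ?thesis using x1 by blast
          qed
        qed
      qed
    qed
    fix S assume S: "S \<subseteq> \<Union>(facetsK d n)" "finite S" "\<forall>e\<in>facetsK d n. S \<inter> e \<noteq> {}"
    define B where "B j = {j*m+1..j*m+d+3}" for j
    have cB: "2 \<le> card (S \<inter> B j)" if "j < k" for j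
    proof (rule ccontr)
      assume "\<not> 2 \<le> card (S \<inter> B j)"
      then have "card (S \<inter> B j) \<le> Suc 0" by simp
      then have one: "\<And>x y. x \<in> S \<inter> B j \<Longrightarrow> y \<in> S \<inter> B j \<Longrightarrow> x = y"
        using card_le_Suc0_iff_eq[of "S \<inter> B j"] S(2) by blast
      define a where "a = j*m+1"
      have "(j+1)*m \<le> k*m" using that by (intro mult_le_mono1) simp
      then have an: "a + d + 2 \<le> n" using m by (simp add: a_def m_def algebra_simps)
      have Bj: "B j = {a..a+d+2}" by (simp add: B_def a_def)
      have E1: "\<exists>s\<in>S. s \<in> {a..a+d+1} \<and> s \<noteq> w" if "a < w" "w < a+d+1" for w
        using S(3) memK[of a d n w] that an by (auto simp: a_def)
      have E2: "\<exists>s\<in>S. s \<in> {a+1..a+1+d+1} \<and> s \<noteq> w" if "a+1 < w" "w < a+1+d+1" for w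
        using S(3) memK[of "a+1" d n w] that an by (auto simp: a_def)
      obtain t1 where t1: "t1 \<in> S" "t1 \<in> {a..a+d+1}" "t1 \<noteq> a+1" using E1[of "a+1"] assms by auto
      obtain t2 where t2: "t2 \<in> S" "t2 \<in> {a+1..a+1+d+1}" "t2 \<noteq> a+2" using E2[of "a+2"] assms by auto
      have "t1 = t2" using one[of t1 t2] t1 t2 Bj by auto
      have tB: "t1 \<in> S \<inter> B j" using t1 Bj by auto
      show False
      proof (cases "t1 < a+d+1")
        case True
        have "a < t1" using t1 t2 \<open>t1 = t2\<close> by auto
        then obtain s where s: "s \<in> S" "s \<in> {a..a+d+1}" "s \<noteq> t1" using E1[of t1] True by blast
        then show False using one[of s t1] tB Bj by auto
      next
        case False
        then have "t1 = a+d+1" using t1 by auto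
        then obtain s where s: "s \<in> S" "s \<in> {a+1..a+1+d+1}" "s \<noteq> t1" using E2[of t1] assms by auto
        then show False using one[of s t1] tB Bj by auto
      qed
    qed
    have disj: "\<forall>i\<in>{..<k}. \<forall>j\<in>{..<k}. i \<noteq> j \<longrightarrow> (S \<inter> B i) \<inter> (S \<inter> B j) = {}"
    proof (intro ballI impI)
      fix a b assume ab: "a \<in> {..<k}" "b \<in> {..<k}" "a \<noteq> b"
      have D: "B x \<inter> B y = {}" if "x < y" for x y
      proof -
        have "(x+1)*m \<le> y*m" using that by (intro mult_le_mono1) simp
        then show ?thesis by (auto simp: B_def m_def algebra_simps)
      qed
      show "(S \<inter> B a) \<inter> (S \<inter> B b) = {}"
        using ab D[of a b] D[of b a] by (cases "a < b") auto
    qed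
    have "card (\<Union>j\<in>{..<k}. S \<inter> B j) = (\<Sum>j\<in>{..<k}. card (S \<inter> B j))"
      by (rule card_UN_disjoint) (use S(2) disj in auto)
    also have "\<dots> \<ge> (\<Sum>j\<in>{..<k}. 2)" using cB by (intro sum_mono) auto
    finally have "2*k \<le> card (\<Union>j\<in>{..<k}. S \<inter> B j)" by simp
    also have "\<dots> \<le> card S" using S(2) by (intro card_mono) auto
    finally show "2*k \<le> card S" .
  qed
qed


theorem mainTheorem10:
  fixes d n :: nat
  assumes "d \<ge> 2" and "n \<ge> d + 2"
  shows "(\<forall>k::nat. k \<ge> 1 \<and> n = (d+2)*k \<longrightarrow> real (tau (facetsB d n)) = real n / real (d+2))
       \<and> (\<forall>k::nat. k \<ge> 1 \<and> n = (d+3)*k \<longrightarrow> real (tau (facetsK d n)) = 2 * real n / real (d+3))"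
proof (intro conjI allI impI)
  fix k :: nat assume h: "k \<ge> 1 \<and> n = (d+2)*k"
  then have "tau (facetsB d n) = k" using partB[of d k n] assms by (simp add: mult.commute)
  moreover have "real n = real (d+2) * real k" using h by (simp only: of_nat_mult)
  moreover have "real (d+2) > 0" by simp
  ultimately show "real (tau (facetsB d n)) = real n / real (d+2)" by (simp only:) (simp add: field_simps)
next
  fix k :: nat assume h: "k \<ge> 1 \<and> n = (d+3)*k"
  then have "tau (facetsK d n) = 2*k" using partK[of d k n] assms by (simp add: mult.commute)
  moreover have "real n = real (d+3) * real k" using h by (simp only: of_nat_mult)
  moreover have "real (d+3) > 0" by simp
  ultimately show "real (tau (facetsK d n)) = 2 * real n / real (d+3)" by (simp only:) (simp add: field_simps)
qed

end
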